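(* Fix $y>0$ and $0\le p_1'<p_1''\le y$. Let $q_1(\cdot,\cdot)$ be APT-rationalizable, and let $\overline{p_1}$ be the minimum price $p_1\in[0,y]$ with $q_1(p_1,y)=0$. Let $F^{APT}$ be the CDF of the distribution placing probability $1-q_1(p_1',y)$ at $0$, probability $q_1(p_1',y)-q_1(p_1'',y)$ at $\overline{p_1}-p_1'$, and probability $q_1(p_1'',y)$ at $p_1''-p_1'$. Let $F^{RUM}(z)=0$ for $z<0$, $F^{RUM}(z)=1-q_1(p_1'+z,y)$ for $0\le z<p_1''-p_1'$, and $F^{RUM}(z)=1$ for $z\ge p_1''-p_1'$. Then $F^{APT}$ first-order stochastically dominates $F^{RUM}$, i.e. $F^{APT}(z)\le F^{RUM}(z)$ for all real $z$.
   Context: Two goods: good 0 (price $0$) and good 1 (price $p_1\ge0$); consumers have common income $y>0$, choose one good and spend the rest on a numeraire; $q_1(p_1,y)$ is the population probability of choosing good 1, defined for $y>0$, $p_1\in[0,y]$. $q_1$ is APT-rationalizable if there exist $U_0:(0,\infty)\to[0,\infty)$ strictly increasing, $U_1:[0,\infty)\to[0,\infty)$ continuous and strictly increasing, with: for every $y>0$ some $\bar p_1\in[0,y]$ has $U_0(y)\ge U_1(y-\bar p_1)$; and a CDF $G$ of attention thresholds with $G(0)=0$, such that $q_{1}(p_{1},y)=\mathbb{1}\{U_{0}(y)<U_{1}(y-p_{1})\}\,(1-G(p_{1}))$. (In the paper, $F^{APT}$ is the distribution of equivalent variation of the price increase from $p_1'$ to $p_1''$ identified under this model when additionally $G(t)<1$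 for all finite $t$, and $F^{RUM}$ is the distribution of equivalent variation identified under a random utility model with full attention, both from observing $q_1(p_1,y)$ for all $p_1\in[p_1',y]$.) *)

theory Defs
  imports "HOL-Analysis.Analysis"
begin

definition is_cdf :: "(real \<Rightarrow> real) \<Rightarrow> bool" where
  "is_cdf G \<longleftrightarrow> mono G \<and> (\<forall>x. continuous (at_right x) G)
      \<and> (G \<longlongrightarrow> 0) at_bot \<and> (G \<longlongrightarrow> 1) at_top"

text \<open>APT-rationalizability of the choice probability q1 (arguments: price p1, income y).
  q1 is only constrained on y > 0, p1 in [0,y].\<close>
definition APT_rationalizable :: "(real \<Rightarrow> real \<Rightarrow> real) \<Rightarrow> bool" where
  "APT_rationalizable q1 \<longleftrightarrow>
     (\<exists>(U0::real\<Rightarrow>real) (U1::real\<Rightarrow>real) (G::real\<Rightarrow>real).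
        (\<forall>y::real>0. U0 y \<ge> 0) \<and> strict_mono_on {0::real<..} U0 \<and>
        (\<forall>x\<ge>0. U1 x \<ge> 0) \<and> continuous_on {0::real..} U1 \<and> strict_mono_on {0::real..} U1 \<and>
        (\<forall>y>0. \<exists>pb\<in>{0..y}. U0 y \<ge> U1 (y - pb)) \<and>
        is_cdf G \<and> G 0 = 0 \<and>
        (\<forall>y>0. \<forall>p1\<in>{0..y}.
            q1 p1 y = (if U0 y < U1 (y - p1) then (1::real) else 0) * (1 - G p1)))"

definition F_APT :: "(real \<Rightarrow> real \<Rightarrow> real) \<Rightarrow> real \<Rightarrow> real \<Rightarrow> real \<Rightarrow> real \<Rightarrow> real \<Rightarrow> real" where
  "F_APT q1 y p' p'' pbar z =
     (if 0 \<le> z then 1 - q1 p' y else 0)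
   + (if pbar - p' \<le> z then q1 p' y - q1 p'' y else 0)
   + (if p'' - p' \<le> z then q1 p'' y else 0)"

definition F_RUM :: "(real \<Rightarrow> real \<Rightarrow> real) \<Rightarrow> real \<Rightarrow> real \<Rightarrow> real \<Rightarrow> real \<Rightarrow> real" where
  "F_RUM q1 y p' p'' z =
     (if z < 0 then 0 else if z < p'' - p' then 1 - q1 (p' + z) y else 1)"

end

theory Submission
  imports Defs
begin

lemma cdf_le1:
  assumes "is_cdf G" shows "G x \<le> 1"
proof -
  have m: "mono G" and l: "(G \<longlongrightarrow> 1) at_top" using assms unfolding is_cdf_def by auto
  have "eventually (\<lambda>t. G x \<le> G t) at_top"
    using eventually_ge_at_top[of x] by eventually_elim (use m in \<open>auto simp: mono_def\<close>)
  from tendsto_le[OF trivial_limit_at_top_linorder l tendsto_const this] show ?thesis .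
qed

lemma q_props:
  assumes "APT_rationalizable q1" "y > 0"
  shows "\<forall>p\<in>{0..y}. 0 \<le> q1 p y \<and> q1 p y \<le> 1"
    "\<forall>a b. 0 \<le> a \<longrightarrow> a \<le> b \<longrightarrow> b \<le> y \<longrightarrow> q1 b y \<le> q1 a y"
proof -
  obtain U0 U1 :: "real \<Rightarrow> real" and G :: "real \<Rightarrow> real" where
    u1: "strict_mono_on {0::real..} U1" and G: "is_cdf G" "G 0 = 0" and
    q: "\<forall>y>0. \<forall>p1\<in>{0..y}.
            q1 p1 y = (if U0 y < U1 (y - p1) then (1::real) else 0) * (1 - G p1)"
    using assms(1) unfolding APT_rationalizable_def by blast
  have gm: "mono G" using G unfolding is_cdf_def by auto
  have g0: "p \<ge> 0 \<Longrightarrow> 0 \<le> G p" for p using gm G(2) by (metis monoD)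
  have g1: "G p \<le> 1" for p using cdf_le1[OF G(1)] .
  show "\<forall>p\<in>{0..y}. 0 \<le> q1 p y \<and> q1 p y \<le> 1"
  proof
    fix p assume p: "p \<in> {0..y}"
    then show "0 \<le> q1 p y \<and> q1 p y \<le> 1" using q assms(2) g0[of p] g1[of p] by auto
  qed
  show "\<forall>a b. 0 \<le> a \<longrightarrow> a \<le> b \<longrightarrow> b \<le> y \<longrightarrow> q1 b y \<le> q1 a y"
  proof (intro allI impI)
    fix a b assume ab: "0 \<le> a" "a \<le> b" "b \<le> y"
    have i: "U0 y < U1 (y - b) \<Longrightarrow> U0 y < U1 (y - a)"
    proof -
      assume h: "U0 y < U1 (y - b)"
      have "U1 (y - b) \<le> U1 (y - a)"
      proof (cases "a = b")
        case False
        then have "U1 (y - b) < U1 (y - a)" using u1 ab unfolding strict_mono_on_def by auto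
        then show ?thesis by simp
      qed simp
      then show ?thesis using h by simp
    qed
    have "G a \<le> G b" using gm ab by (simp add: monoD)
    moreover have "q1 a y = (if U0 y < U1 (y - a) then (1::real) else 0) * (1 - G a)"
      "q1 b y = (if U0 y < U1 (y - b) then (1::real) else 0) * (1 - G b)"
      using q assms(2) ab by auto
    ultimately show "q1 b y \<le> q1 a y" using i g1[of a] g1[of b] by auto
  qed
qed

theorem theorem5:
  fixes q1 :: "real \<Rightarrow> real \<Rightarrow> real" and y p' p'' pbar :: real
  assumes "y > 0" and "0 \<le> p'" and "p' < p''" and "p'' \<le> y"
    and "APT_rationalizable q1"
    and "pbar \<in> {0..y}" and "q1 pbar y = 0"
    and "\<forall>p\<in>{0..y}. q1 p y = 0 \<longrightarrow> pbar \<le> p"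
  shows "\<forall>z::real. F_APT q1 y p' p'' pbar z \<le> F_RUM q1 y p' p'' z"
proof
  fix z :: real
  note B = q_props(1)[OF assms(5,1)] and M = q_props(2)[OF assms(5,1)]
  have z0: "\<And>p. p \<in> {pbar..y} \<Longrightarrow> q1 p y = 0"
  proof -
    fix p assume "p \<in> {pbar..y}"
    then have "q1 p y \<le> q1 pbar y" "0 \<le> q1 p y" using M[rule_format, of pbar p] B assms(6) by auto
    then show "q1 p y = 0" using assms(7) by simp
  qed
  have b1: "0 \<le> q1 p' y" "q1 p' y \<le> 1" "0 \<le> q1 p'' y" "q1 p'' y \<le> 1"
    using B assms(1-4) by auto
  have m12: "q1 p'' y \<le> q1 p' y" using M[rule_format, of p' p''] assms(1-4) by auto
  show "F_APT q1 y p' p'' pbar z \<le> F_RUM q1 y p' p'' z"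
  proof (cases "z < 0")
    case True
    then have "pbar - p' \<le> z \<Longrightarrow> q1 p' y = 0 \<and> q1 p'' y = 0" using z0[of p'] z0[of p''] assms(1-4) by auto
    then show ?thesis using True assms(3) unfolding F_APT_def F_RUM_def by auto
  next
    case nz: False
    show ?thesis
    proof (cases "z < p'' - p'")
      case True
      have mz: "q1 (p' + z) y \<le> q1 p' y" using M[rule_format, of p' "p'+z"] nz True assms(1-4) by auto
      have "pbar - p' \<le> z \<Longrightarrow> q1 (p' + z) y = 0" using z0[of "p'+z"] nz True assms(1-4) by auto
      then show ?thesis using True nz mz b1 unfolding F_APT_def F_RUM_def by auto
    next
      case False
      then show ?thesis using nz b1 m12 unfolding F_APT_def F_RUM_def by auto
    qed
  qed
qed

end
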